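(* Let $G(z)=\sum_{n\ge0}a_n^2z^n$ with $a_n\ge0$ (infinitely many non-zero) have radius of convergence $R_G$, and put $t_G=\log R_G$, $H(z)=G(e^z)$, $B(t)=(\log H)''(t)$. Then for all $t<t_G$ and $\theta\in[-\pi,\pi]$ for which the denominator below is non-zero, \[ \frac{|H(t)H'(t+i\theta)-H(t+i\theta)H'(t)|^2}{H^2(t)\left(H^2(t)-|H(t+i\theta)|^2\right)}\le B(t). \] *)

theory Defs
  imports "HOL-Analysis.Analysis"
begin

definition G_fun :: "(nat \<Rightarrow> real) \<Rightarrow> complex \<Rightarrow> complex" where
  "G_fun a z = (\<Sum>n. complex_of_real ((a n)\<^sup>2) * z ^ n)"

definition R_G :: "(nat \<Rightarrow> real) \<Rightarrow> ereal" where
  "R_G a = conv_radius (\<lambda>n. (a n)\<^sup>2)"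

definition H_fun :: "(nat \<Rightarrow> real) \<Rightarrow> complex \<Rightarrow> complex" where
  "H_fun a z = G_fun a (exp z)"

text \<open>B(t) = (log H)''(t) for real t, where H is real and positive on the reals.\<close>
definition B_fun :: "(nat \<Rightarrow> real) \<Rightarrow> real \<Rightarrow> real" where
  "B_fun a t = deriv (deriv (\<lambda>s. ln (Re (H_fun a (complex_of_real s))))) t"

end

theory Submission
  imports Defs
begin
lemma P_mult_n:
  fixes d :: "nat \<Rightarrow> 'a::{real_normed_field,banach}"
  assumes P: "\<And>x::'a. ereal (norm x) < R \<Longrightarrow> summable (\<lambda>n. d n * x^n)"
    and x: "ereal (norm x) < R"
  shows "summable (\<lambda>n. of_nat n * d n * x^n)"
proof -
  obtain K where K: "norm x < K" "ereal K < R" using ereal_dense2[OF x] by auto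
  have sK: "\<And>y::'a. norm y < K \<Longrightarrow> summable (\<lambda>n. d n * y^n)"
    using P K(2) by (meson ereal_less_eq(3) le_less_trans less_imp_le)
  have sd: "summable (\<lambda>n. diffs d n * x^n)" by (rule termdiff_converges[OF K(1) sK])
  then have "summable (\<lambda>n. diffs d n * x^n * x)" by (rule summable_mult2)
  then have "summable (\<lambda>n. of_nat (Suc n) * d (Suc n) * x ^ Suc n)"
    by (simp add: diffs_def algebra_simps)
  then show ?thesis by (subst (asm) summable_Suc_iff)
qed

lemma powser_exp_deriv:
  fixes d :: "nat \<Rightarrow> 'a::{real_normed_field,banach}"
  assumes P: "\<And>x::'a. ereal (norm x) < R \<Longrightarrow> summable (\<lambda>n. d n * x^n)"
    and z: "ereal (norm (exp z)) < R"
  shows "((\<lambda>z. \<Sum>n. d n * exp z ^ n) has_field_derivative (\<Sum>n. of_nat n * d n * exp z ^ n)) (at z)"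
proof -
  obtain K where K: "norm (exp z) < K" "ereal K < R" using ereal_dense2[OF z] by auto
  have sK: "\<And>y::'a. norm y < K \<Longrightarrow> summable (\<lambda>n. d n * y^n)"
    using P K(2) by (meson ereal_less_eq(3) le_less_trans less_imp_le)
  have D: "((\<lambda>x. \<Sum>n. d n * x^n) has_field_derivative (\<Sum>n. diffs d n * exp z^n)) (at (exp z))"
    by (rule termdiffs_strong'[OF sK K(1)])
  have sd: "summable (\<lambda>n. diffs d n * exp z ^n)" by (rule termdiff_converges[OF K(1) sK])
  have eq: "(\<Sum>n. diffs d n * exp z^n) * exp z = (\<Sum>n. of_nat n * d n * exp z ^ n)"
  proof -
    have "(\<lambda>n. diffs d n * exp z^n * exp z) sums ((\<Sum>n. diffs d n * exp z^n) * exp z)"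
      using sd by (intro sums_mult2 summable_sums)
    then have "(\<lambda>n. of_nat (Suc n) * d (Suc n) * exp z ^ Suc n) sums ((\<Sum>n. diffs d n * exp z^n) * exp z)"
      by (simp add: diffs_def algebra_simps)
    then have "(\<lambda>n. of_nat n * d n * exp z^n) sums ((\<Sum>n. diffs d n * exp z^n) * exp z)"
      by (subst (asm) sums_Suc_iff) simp
    thus ?thesis by (simp add: sums_iff)
  qed
  have "((\<lambda>z. \<Sum>n. d n * exp z ^ n) has_field_derivative (\<Sum>n. diffs d n * exp z^n) * exp z) (at z)"
    using DERIV_chain2[OF D DERIV_exp] .
  thus ?thesis using eq by simp
qed

lemma cs_weighted:
  fixes w x :: "nat \<Rightarrow> real" and y :: "nat \<Rightarrow> complex"
  assumes "\<And>n. w n \<ge> 0"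
  shows "(cmod (\<Sum>n\<in>A. of_real (w n * x n) * y n))\<^sup>2 \<le> (\<Sum>n\<in>A. w n * (x n)\<^sup>2) * (\<Sum>n\<in>A. w n * (cmod (y n))\<^sup>2)"
proof -
  have "cmod (\<Sum>n\<in>A. of_real (w n * x n) * y n) \<le> (\<Sum>n\<in>A. cmod (of_real (w n * x n) * y n))"
    by (rule norm_sum)
  also have "\<dots> = (\<Sum>n\<in>A. (sqrt (w n) * \<bar>x n\<bar>) * (sqrt (w n) * cmod (y n)))"
    using assms by (intro sum.cong refl) (simp add: norm_mult abs_mult real_sqrt_mult[symmetric])
  finally have 1: "(cmod (\<Sum>n\<in>A. of_real (w n * x n) * y n))\<^sup>2 \<le> (\<Sum>n\<in>A. (sqrt (w n) * \<bar>x n\<bar>) * (sqrt (w n) * cmod (y n)))\<^sup>2"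
    by (rule power_mono) simp
  also have "\<dots> \<le> (\<Sum>n\<in>A. (sqrt (w n) * \<bar>x n\<bar>)\<^sup>2) * (\<Sum>n\<in>A. (sqrt (w n) * cmod (y n))\<^sup>2)"
    by (rule Cauchy_Schwarz_ineq_sum)
  also have "\<dots> = (\<Sum>n\<in>A. w n * (x n)\<^sup>2) * (\<Sum>n\<in>A. w n * (cmod (y n))\<^sup>2)"
    using assms by (simp add: power_mult_distrib)
  finally show ?thesis .
qed

lemma fin_ineq:
  fixes w :: "nat \<Rightarrow> real" and e :: "nat \<Rightarrow> complex"
  assumes w: "\<And>n. w n \<ge> 0" and e: "\<And>n. cmod (e n) = 1"
  and that: "S0 = (\<Sum>n\<in>A. w n)" "S1 = (\<Sum>n\<in>A. real n * w n)" "S2 = (\<Sum>n\<in>A. real n * (real n * w n))"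
     "E0 = (\<Sum>n\<in>A. of_real (w n) * e n)" "E1 = (\<Sum>n\<in>A. of_real (real n * w n) * e n)"
  shows "S0\<^sup>2 * (cmod (of_real S0 * E1 - E0 * of_real S1))\<^sup>2 \<le> S0\<^sup>2 * ((S0*S2 - S1*S1) * (S0\<^sup>2 - (cmod E0)\<^sup>2))"
proof -
  define x where "x n = S0 * real n - S1" for n
  define y where "y n = of_real S0 * e n - E0" for n
  have ee: "e n * cnj (e n) = 1" for n
    using complex_norm_square[of "e n"] e[of n] by simp
  have 1: "(\<Sum>n\<in>A. of_real (w n * x n) * y n) = of_real S0 * (of_real S0 * E1 - E0 * of_real S1)"
  proof -
    have "(\<Sum>n\<in>A. of_real (w n * x n) * y n) = 
      of_real S0 * of_real S0 * (\<Sum>n\<in>A. of_real (real n * w n) * e n)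
      - of_real S0 * E0 * (\<Sum>n\<in>A. of_real (real n * w n))
      - of_real S1 * of_real S0 * (\<Sum>n\<in>A. of_real (w n) * e n)
      + of_real S1 * E0 * (\<Sum>n\<in>A. of_real (w n))"
      by (simp add: x_def y_def algebra_simps sum.distrib sum_subtractf sum_distrib_left)
    also have "\<dots> = of_real S0 * (of_real S0 * E1 - E0 * of_real S1)"
      using that by (simp add: algebra_simps)
    finally show ?thesis .
  qed
  have 2: "(\<Sum>n\<in>A. w n * (x n)\<^sup>2) = S0 * (S0*S2 - S1*S1)"
  proof -
    have "(\<Sum>n\<in>A. w n * (x n)\<^sup>2) = S0 * S0 * (\<Sum>n\<in>A. real n * (real n * w n))
       - 2 * S0 * S1 * (\<Sum>n\<in>A. real n * w n) + S1 * S1 * (\<Sum>n\<in>A. w n)"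
      by (simp add: x_def power2_eq_square algebra_simps sum.distrib sum_subtractf sum_distrib_left)
    also have "\<dots> = S0 * (S0*S2 - S1*S1)"
      using that by (simp add: algebra_simps)
    finally show ?thesis .
  qed
  have 3: "(\<Sum>n\<in>A. w n * (cmod (y n))\<^sup>2) = S0 * (S0\<^sup>2 - (cmod E0)\<^sup>2)"
  proof -
    have "of_real (\<Sum>n\<in>A. w n * (cmod (y n))\<^sup>2) = (\<Sum>n\<in>A. of_real (w n) * (y n * cnj (y n)))"
      by (simp only: of_real_sum of_real_mult complex_norm_square)
    also have "\<dots> = of_real S0 * of_real S0 * (\<Sum>n\<in>A. of_real (w n) * (e n * cnj (e n)))
       - of_real S0 * cnj E0 * (\<Sum>n\<in>A. of_real (w n) * e n)
       - of_real S0 * E0 * cnj (\<Sum>n\<in>A. of_real (w n) * e n)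
       + E0 * cnj E0 * (\<Sum>n\<in>A. of_real (w n))"
      by (simp add: y_def algebra_simps sum.distrib sum_subtractf sum_distrib_left cnj_sum)
    also have "\<dots> = of_real (S0 * (S0\<^sup>2 - (cmod E0)\<^sup>2))"
    proof -
      have a: "(\<Sum>n\<in>A. of_real (w n) * (e n * cnj (e n))) = of_real S0" using that(1) by (simp add: ee)
      have b: "(\<Sum>n\<in>A. of_real (w n) * e n) = E0" using that(4) by simp
      have c: "(\<Sum>n\<in>A. of_real (w n)) = (of_real S0 :: complex)" using that(1) by simp
      have d: "E0 * cnj E0 = of_real ((cmod E0)\<^sup>2)" by (rule complex_norm_square[symmetric])
      have d2: "cnj E0 * E0 = of_real ((cmod E0)\<^sup>2)" using d by (simp add: mult.commute)
      show ?thesis unfolding a b c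
        by (simp add: algebra_simps d d2 power2_eq_square del: of_real_power)
    qed
    finally show ?thesis using of_real_eq_iff by blast
  qed
  have "(cmod (\<Sum>n\<in>A. of_real (w n * x n) * y n))\<^sup>2 \<le> (\<Sum>n\<in>A. w n * (x n)\<^sup>2) * (\<Sum>n\<in>A. w n * (cmod (y n))\<^sup>2)"
    by (rule cs_weighted[OF w])
  then have "(cmod (of_real S0 * (of_real S0 * E1 - E0 * of_real S1)))\<^sup>2 \<le> (S0 * (S0*S2 - S1*S1)) * (S0 * (S0\<^sup>2 - (cmod E0)\<^sup>2))"
    unfolding 1 2 3 .
  moreover have "(cmod (of_real S0 * (of_real S0 * E1 - E0 * of_real S1)))\<^sup>2 = S0\<^sup>2 * (cmod (of_real S0 * E1 - E0 * of_real S1))\<^sup>2"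
    by (simp add: norm_mult power_mult_distrib)
  moreover have "(S0 * (S0*S2 - S1*S1)) * (S0 * (S0\<^sup>2 - (cmod E0)\<^sup>2)) = S0\<^sup>2 * ((S0*S2 - S1*S1) * (S0\<^sup>2 - (cmod E0)\<^sup>2))"
    by (simp add: power2_eq_square)
  ultimately show ?thesis by simp
qed

theorem corollary5p3:
  fixes a :: "nat \<Rightarrow> real" and t \<theta> :: real
  assumes nonneg: "\<And>n. a n \<ge> 0"
    and inf_nz: "infinite {n. a n \<noteq> 0}"
    and t_lt: "ereal (exp t) < R_G a"
    and theta: "\<theta> \<in> {-pi..pi}"
    and denom: "(Re (H_fun a (complex_of_real t)))\<^sup>2 *
        ((Re (H_fun a (complex_of_real t)))\<^sup>2 - (cmod (H_fun a (Complex t \<theta>)))\<^sup>2) \<noteq> 0"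
  shows "(cmod (H_fun a (complex_of_real t) * deriv (H_fun a) (Complex t \<theta>)
              - H_fun a (Complex t \<theta>) * deriv (H_fun a) (complex_of_real t)))\<^sup>2
         / ((Re (H_fun a (complex_of_real t)))\<^sup>2 *
            ((Re (H_fun a (complex_of_real t)))\<^sup>2 - (cmod (H_fun a (Complex t \<theta>)))\<^sup>2))
         \<le> B_fun a t"
proof -
  define c where "c n = (a n)\<^sup>2" for n
  define R where "R = R_G a"
  have c_nn: "c n \<ge> 0" for n by (simp add: c_def)
  have Rc: "R = conv_radius c" by (simp add: R_def R_G_def c_def[abs_def])
  have Gc: "G_fun a z = (\<Sum>n. of_real (c n) * z^n)" for z by (simp add: G_fun_def c_def)
  have PR: "\<And>x::real. ereal (norm x) < R \<Longrightarrow> summable (\<lambda>n. c n * x^n)"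
    unfolding Rc by (rule summable_in_conv_radius)
  have crc: "conv_radius (\<lambda>n. complex_of_real (c n)) = conv_radius c" by (simp add: conv_radius_def)
  have PC: "\<And>x::complex. ereal (norm x) < R \<Longrightarrow> summable (\<lambda>n. of_real (c n) * x^n)"
    unfolding Rc crc[symmetric] by (rule summable_in_conv_radius)
  have PR1: "\<And>x::real. ereal (norm x) < R \<Longrightarrow> summable (\<lambda>n. of_nat n * c n * x^n)"
    by (rule P_mult_n[where R=R, OF PR])
  have PR2: "\<And>x::real. ereal (norm x) < R \<Longrightarrow> summable (\<lambda>n. of_nat n * (of_nat n * c n) * x^n)"
    by (rule P_mult_n[where R=R, OF PR1])
  have PC1: "\<And>x::complex. ereal (norm x) < R \<Longrightarrow> summable (\<lambda>n. of_nat n * of_real (c n) * x^n)"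
    by (rule P_mult_n[where R=R, OF PC])
  define F0 where "F0 s = (\<Sum>n. c n * exp s ^ n)" for s :: real
  define F1 where "F1 s = (\<Sum>n. of_nat n * c n * exp s ^ n)" for s :: real
  define F2 where "F2 s = (\<Sum>n. of_nat n * (of_nat n * c n) * exp s ^ n)" for s :: real
  define U where "U = {s::real. ereal (exp s) < R}"
  have tU: "t \<in> U" using t_lt by (simp add: U_def R_def)
  have UR: "ereal (norm (exp s)) < R" if "s \<in> U" for s
  proof -
    have "norm (exp s) = exp s" by simp
    then show ?thesis using that unfolding U_def by simp
  qed
  have dF0: "(F0 has_real_derivative F1 s) (at s)" if "s \<in> U" for s
    unfolding F0_def[abs_def] F1_def by (rule powser_exp_deriv[where R=R]) (use PR UR[OF that] in auto)
  have dF1: "(F1 has_real_derivative F2 s) (at s)" if "s \<in> U" for s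
    unfolding F1_def[abs_def] F2_def by (rule powser_exp_deriv[where R=R]) (use PR1 UR[OF that] in auto)
  have Uev: "eventually (\<lambda>s'. s' \<in> U) (nhds s)" if "s \<in> U" for s
  proof -
    have "(exp \<longlongrightarrow> exp s) (nhds s)"
      using tendsto_at_iff_tendsto_nhds[of exp s] isCont_exp[of s] by (simp add: isCont_def)
    then have "((\<lambda>s'. ereal (exp s')) \<longlongrightarrow> ereal (exp s)) (nhds s)" by (rule tendsto_ereal)
    from order_tendstoD(2)[OF this] that show ?thesis by (simp add: U_def)
  qed
  obtain m where m: "a m \<noteq> 0" using inf_nz by (metis (mono_tags) Collect_empty_eq finite.emptyI)
  have F0pos: "F0 s > 0" if "s \<in> U" for s
    unfolding F0_def
  proof (rule suminf_pos2[of _ m])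
    show "summable (\<lambda>n. c n * exp s ^ n)" using PR that by (simp add: U_def)
    show "0 \<le> c n * exp s ^ n" for n using c_nn by simp
    show "0 < c m * exp s ^ m" using m by (simp add: c_def)
  qed
  have Hreal: "H_fun a (of_real s) = of_real (F0 s)" if "s \<in> U" for s
  proof -
    have "(\<lambda>n. c n * exp s ^n) sums F0 s" unfolding F0_def
      using PR[of "exp s"] that by (intro summable_sums) (simp add: U_def)
    then have "(\<lambda>n. complex_of_real (c n * exp s^n)) sums of_real (F0 s)"
      by (subst sums_of_real_iff)
    then show ?thesis by (simp add: H_fun_def Gc sums_iff exp_of_real)
  qed
  have Hder: "deriv (H_fun a) z = (\<Sum>n. of_nat n * of_real (c n) * exp z ^ n)" if "ereal (norm (exp z)) < R" for z
  proof -
    have "H_fun a = (\<lambda>z. \<Sum>n. of_real (c n) * exp z ^ n)" by (simp add: fun_eq_iff H_fun_def Gc)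
    then show ?thesis using DERIV_imp_deriv[OF powser_exp_deriv[where R=R, OF PC that]] by simp
  qed
  have Hd1: "deriv (H_fun a) (of_real s) = of_real (F1 s)" if "s \<in> U" for s
  proof -
    have "(\<lambda>n. of_nat n * c n * exp s ^n) sums F1 s" unfolding F1_def
      using PR1[of "exp s"] that by (intro summable_sums) (simp add: U_def)
    then have "(\<lambda>n. complex_of_real (of_nat n * c n * exp s^n)) sums of_real (F1 s)"
      by (subst sums_of_real_iff)
    then show ?thesis using that by (simp add: Hder U_def sums_iff exp_of_real)
  qed
  have dlog: "deriv (\<lambda>s. ln (Re (H_fun a (of_real s)))) s = F1 s / F0 s" if "s \<in> U" for s
  proof -
    have ev: "eventually (\<lambda>s'. ln (Re (H_fun a (of_real s'))) = ln (F0 s')) (nhds s)"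
      using Uev[OF that] by (rule eventually_mono) (simp add: Hreal)
    have "((\<lambda>s. ln (F0 s)) has_real_derivative 1 / F0 s * F1 s) (at s)"
      by (rule DERIV_chain2[OF DERIV_ln_divide[OF F0pos[OF that]] dF0[OF that]])
    then show ?thesis using deriv_cong_ev[OF ev refl] DERIV_imp_deriv by simp
  qed
  have B: "B_fun a t = (F2 t * F0 t - F1 t * F1 t) / (F0 t * F0 t)"
  proof -
    have ev: "eventually (\<lambda>s'. deriv (\<lambda>s. ln (Re (H_fun a (of_real s)))) s' = F1 s' / F0 s') (nhds t)"
      using Uev[OF tU] by (rule eventually_mono) (simp add: dlog)
    have "((\<lambda>s. F1 s / F0 s) has_real_derivative (F2 t * F0 t - F1 t * F1 t) / (F0 t * F0 t)) (at t)"
      by (rule DERIV_divide[OF dF1[OF tU] dF0[OF tU]]) (use F0pos[OF tU] in simp)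
    then show ?thesis unfolding B_fun_def using deriv_cong_ev[OF ev refl] DERIV_imp_deriv by simp
  qed
  define z where "z = exp (Complex t \<theta>)"
  have nz: "norm z = exp t" by (simp add: z_def)
  have zR: "ereal (norm z) < R" using t_lt nz by (simp add: R_def)
  define w where "w n = c n * exp t ^ n" for n
  define e where "e n = z ^ n / of_real (exp t ^ n)" for n
  have w_nn: "w n \<ge> 0" for n using c_nn by (simp add: w_def)
  have e1: "cmod (e n) = 1" for n by (simp add: e_def norm_divide norm_power nz)
  have we: "of_real (w n) * e n = of_real (c n) * z ^ n" for n
    by (simp add: w_def e_def)
  have we1: "of_real (real n * w n) * e n = of_nat n * of_real (c n) * z ^ n" for n
    by (simp add: w_def e_def)
  define S0 where "S0 = F0 t"
  define S1 where "S1 = F1 t"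
  define S2 where "S2 = F2 t"
  define E0 where "E0 = H_fun a (Complex t \<theta>)"
  define E1 where "E1 = deriv (H_fun a) (Complex t \<theta>)"
  have tR: "ereal (norm (exp t)) < R" using tU by (simp add: U_def)
  have sw0: "w sums S0" unfolding S0_def F0_def w_def using PR[OF tR] by (intro summable_sums)
  have sw1: "(\<lambda>n. real n * w n) sums S1" unfolding S1_def F1_def w_def using PR1[OF tR]
    by (simp add: mult.assoc summable_sums)
  have sw2: "(\<lambda>n. real n * (real n * w n)) sums S2" unfolding S2_def F2_def w_def using PR2[OF tR]
    by (simp add: mult.assoc summable_sums)
  have se0: "(\<lambda>n. of_real (w n) * e n) sums E0" unfolding E0_def H_fun_def Gc we z_def[symmetric]
    using PC[OF zR] by (intro summable_sums)
  have se1: "(\<lambda>n. of_real (real n * w n) * e n) sums E1" unfolding E1_def we1 Hder[OF zR[unfolded z_def]] z_def[symmetric]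
    using PC1[OF zR] by (intro summable_sums)
  have S0pos: "S0 > 0" unfolding S0_def using F0pos[OF tU] .
  have key: "S0\<^sup>2 * (cmod (of_real S0 * E1 - E0 * of_real S1))\<^sup>2 \<le> S0\<^sup>2 * ((S0*S2 - S1*S1) * (S0\<^sup>2 - (cmod E0)\<^sup>2))"
  proof (rule LIMSEQ_le)
    define s0 where "s0 N = (\<Sum>n<N. w n)" for N
    define s1 where "s1 N = (\<Sum>n<N. real n * w n)" for N
    define s2 where "s2 N = (\<Sum>n<N. real n * (real n * w n))" for N
    define e0 where "e0 N = (\<Sum>n<N. of_real (w n) * e n)" for N
    define e1 where "e1 N = (\<Sum>n<N. of_real (real n * w n) * e n)" for N
    have l0: "s0 \<longlonglongrightarrow> S0" unfolding s0_def using sw0 by (simp add: sums_def)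
    have l1: "s1 \<longlonglongrightarrow> S1" unfolding s1_def using sw1 by (simp add: sums_def)
    have l2: "s2 \<longlonglongrightarrow> S2" unfolding s2_def using sw2 by (simp add: sums_def)
    have m0: "e0 \<longlonglongrightarrow> E0" unfolding e0_def using se0 by (simp add: sums_def)
    have m1: "e1 \<longlonglongrightarrow> E1" unfolding e1_def using se1 by (simp add: sums_def)
    show "(\<lambda>N. (s0 N)\<^sup>2 * (cmod (of_real (s0 N) * e1 N - e0 N * of_real (s1 N)))\<^sup>2) \<longlonglongrightarrow>
       S0\<^sup>2 * (cmod (of_real S0 * E1 - E0 * of_real S1))\<^sup>2"
      by (intro tendsto_intros l0 l1 l2 m0 m1)
    show "(\<lambda>N. (s0 N)\<^sup>2 * ((s0 N * s2 N - s1 N * s1 N) * ((s0 N)\<^sup>2 - (cmod (e0 N))\<^sup>2))) \<longlonglongrightarrow>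
       S0\<^sup>2 * ((S0*S2 - S1*S1) * (S0\<^sup>2 - (cmod E0)\<^sup>2))"
      by (intro tendsto_intros l0 l1 l2 m0 m1)
    show "\<exists>N0. \<forall>N\<ge>N0. (s0 N)\<^sup>2 * (cmod (of_real (s0 N) * e1 N - e0 N * of_real (s1 N)))\<^sup>2
       \<le> (s0 N)\<^sup>2 * ((s0 N * s2 N - s1 N * s1 N) * ((s0 N)\<^sup>2 - (cmod (e0 N))\<^sup>2))"
      by (intro exI allI impI fin_ineq[OF w_nn e1]) (simp_all add: s0_def s1_def s2_def e0_def e1_def)
  qed
  have key2: "(cmod (of_real S0 * E1 - E0 * of_real S1))\<^sup>2 \<le> (S0*S2 - S1*S1) * (S0\<^sup>2 - (cmod E0)\<^sup>2)"
    using key S0pos by (simp add: mult_le_cancel_left_pos)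
  have "cmod E0 \<le> (\<Sum>n. norm (of_real (w n) * e n))"
    using se0 summable_norm[of "\<lambda>n. of_real (w n) * e n"] sw0 w_nn e1
    by (simp add: sums_iff norm_mult)
  also have "\<dots> = S0" using sw0 w_nn e1 by (simp add: sums_iff norm_mult)
  finally have "cmod E0 \<le> S0" .
  then have "(cmod E0)\<^sup>2 \<le> S0\<^sup>2" by (simp add: power_mono)
  moreover have "S0\<^sup>2 * (S0\<^sup>2 - (cmod E0)\<^sup>2) \<noteq> 0"
    using denom tU by (simp add: Hreal S0_def E0_def)
  ultimately have Dpos: "S0\<^sup>2 - (cmod E0)\<^sup>2 > 0" by simp
  have "(cmod (of_real S0 * E1 - E0 * of_real S1))\<^sup>2 / (S0\<^sup>2 * (S0\<^sup>2 - (cmod E0)\<^sup>2))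
      \<le> ((S0*S2 - S1*S1) * (S0\<^sup>2 - (cmod E0)\<^sup>2)) / (S0\<^sup>2 * (S0\<^sup>2 - (cmod E0)\<^sup>2))"
    by (rule divide_right_mono[OF key2]) (intro mult_nonneg_nonneg zero_le_power2 less_imp_le[OF Dpos])
  also have "\<dots> = (S2 * S0 - S1 * S1) / (S0 * S0)"
    using Dpos S0pos by (simp add: power2_eq_square field_simps)
  finally show ?thesis
    using tU by (simp add: B Hreal Hd1 S0_def S1_def S2_def E0_def E1_def)
qed

end
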